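(* Let $k$ be an odd positive integer and $\mu, n$ positive integers with $2\mu$ and $n$ coprime, and suppose there is an integer $s$ with \[ k^4\mu^4 n^4 - 16k(4\mu^2+n^2) = s^2. \] Then $(k, \mu, n) = (5, 1, 1)$. *)

theory Defs
  imports Main
begin

end

theory Submission
  imports Defs
begin

definition chk :: bool where "chk = list_all (\<lambda>a::int. list_all (\<lambda>k::int.
   if a*k \<le> 40 \<and> k mod 2 = 1 \<and> (a*a) mod k = 0 then
   list_all (\<lambda>m::int. if a*k*m*m \<le> a^3+68 \<and> 0 < k*(a*k*m*m-4) \<and> (a*a+16*k*m*m) mod (k*(a*k*m*m-4)) = 0 then
      (let y = (a*a+16*k*m*m) div (k*(a*k*m*m-4)) in y mod 3 = 2 \<or> (m mod 3 = 0 \<and> y mod 3 = 0) \<or> (k = 5 \<and> m = 1 \<and> y = 1)) else True) [1..40]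
   else True) [1..40]) [1..40]"

lemma chk_true: chk by code_simp

lemma chk_inst:
  fixes a k m :: int
  assumes "1 \<le> a" "a \<le> 40" "1 \<le> k" "k \<le> 40" "1 \<le> m" "m \<le> 40"
    "a*k \<le> 40" "k mod 2 = 1" "(a*a) mod k = 0"
    "a*k*m*m \<le> a^3+68" "0 < k*(a*k*m*m-4)" "(a*a+16*k*m*m) mod (k*(a*k*m*m-4)) = 0"
  shows "let y = (a*a+16*k*m*m) div (k*(a*k*m*m-4)) in y mod 3 = 2 \<or> (m mod 3 = 0 \<and> y mod 3 = 0) \<or> (k = 5 \<and> m = 1 \<and> y = 1)"
proof -
  have "a \<in> set [1..40]" "k \<in> set [1..40]" "m \<in> set [1..40]" using assms by auto
  with chk_true assms show ?thesis unfolding chk_def list_all_iff by fastforce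
qed

lemma sq_mod3: "((n::int)^2) mod 3 \<noteq> 2"
proof -
  have "n mod 3 \<in> {0,1,2}" by auto
  moreover have "(n^2) mod 3 = ((n mod 3)^2) mod 3" by (simp add: power_mod)
  ultimately show ?thesis by auto
qed

lemma sq3_dvd: "(3::int) dvd n^2 \<Longrightarrow> 3 dvd n"
proof -
  assume h: "(3::int) dvd n^2"
  have "n mod 3 \<in> {0,1,2}" by auto
  moreover have "(n^2) mod 3 = ((n mod 3)^2) mod 3" by (simp add: power_mod)
  moreover have "(n^2) mod 3 = 0" using h by simp
  ultimately have "n mod 3 = 0" by auto
  then show ?thesis by presburger
qed

theorem theorem8:
  fixes k \<mu> n s :: int
  assumes "k > 0" and "odd k" and "\<mu> > 0" and "n > 0"
    and "coprime (2 * \<mu>) n"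
    and "k^4 * \<mu>^4 * n^4 - 16 * k * (4 * \<mu>^2 + n^2) = s^2"
  shows "k = 5 \<and> \<mu> = 1 \<and> n = 1"
proof -
  define t where "t = \<bar>s\<bar>"
  have t0: "t \<ge> 0" and ts: "t^2 = s^2" unfolding t_def by auto
  define x where "x = \<mu>^2"
  define y where "y = n^2"
  have x1: "x \<ge> 1" unfolding x_def using assms(3)
    by (metis int_one_le_iff_zero_less one_le_power zero_less_power)
  have y1: "y \<ge> 1" unfolding y_def using assms(4)
    by (metis int_one_le_iff_zero_less one_le_power zero_less_power)
  define A where "A = k^2 * x * y"
  have Apos: "A > 0" unfolding A_def using x1 y1 assms(1) by simp
  have eqA: "A^2 - 16*k*(4*x+y) = t^2"
    using assms(6) ts unfolding A_def x_def y_def by (simp add: power_mult_distrib power_mult[symmetric] mult.assoc)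
  have pos: "16*k*(4*x+y) > 0" using x1 y1 assms(1) by simp
  have tA: "t < A"
  proof (rule ccontr)
    assume "\<not> t < A"
    then have "A^2 \<le> t^2" using Apos by (simp add: power_mono)
    then show False using eqA pos by linarith
  qed
  have prod: "(A - t) * (A + t) = 16*k*(4*x+y)" using eqA by (simp add: algebra_simps power2_eq_square)
  have "even (A - t)"
  proof (rule ccontr)
    assume h: "odd (A - t)"
    then have "odd (A + t)" by (metis add_diff_cancel_left' diff_add_cancel even_add mult_2 odd_add)
    with h have "odd ((A - t) * (A + t))" by simp
    then show False using prod by simp
  qed
  then obtain a where a: "A - t = 2*a" by blast
  have a1: "a \<ge> 1" using a tA by linarith
  have a2: "2*a \<le> A" using a t0 by linarith
  have eq1: "a * (A - a) = 4*k*(4*x+y)"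
  proof -
    have "(2*a) * (2*A - 2*a) = 16*k*(4*x+y)" using prod a by (smt (verit))
    then show ?thesis by (simp add: algebra_simps)
  qed
  define c where "c = a*k"
  have E: "k * (c*x*y - 16*x - 4*y) = a^2"
    using eq1 unfolding c_def A_def by (simp add: algebra_simps power2_eq_square)
  have ineq0: "a * A \<le> 2 * (a * (A - a))"
  proof -
    have "a * A \<le> a * (2*(A - a))" using a1 a2 by (intro mult_left_mono) auto
    then show ?thesis by (simp add: algebra_simps)
  qed
  have "k * (c*x*y) \<le> k * (32*x + 8*y)"
    using ineq0 eq1 unfolding c_def A_def by (simp add: algebra_simps power2_eq_square)
  then have I: "c*x*y \<le> 32*x + 8*y" using assms(1) by simp
  have xy1: "x*y \<ge> 1" using mult_mono[of 1 x 1 y] x1 y1 by simp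
  have "c*(x*y) \<le> 40*(x*y)"
  proof -
    have "32*x \<le> 32*(x*y)" using x1 y1 by simp
    moreover have "8*y \<le> 8*(x*y)" using x1 y1 by simp
    ultimately show ?thesis using I by (simp add: algebra_simps)
  qed
  then have c40: "c \<le> 40" using mult_right_le_imp_le[of c "x*y" 40] xy1 by simp
  have k1: "k \<ge> 1" using assms(1) by simp
  have c_a: "a \<le> c" unfolding c_def using a1 k1 by simp
  have c_k: "k \<le> c" unfolding c_def using a1 k1 by simp
  have Dpos: "c*x*y - 16*x - 4*y > 0"
  proof -
    have "a^2 > 0" using a1 by simp
    then have "k * (c*x*y - 16*x - 4*y) > 0" using E by simp
    then show ?thesis using assms(1) by (simp add: zero_less_mult_iff)
  qed
  have cx5: "c*x \<ge> 5"
  proof (rule ccontr)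
    assume "\<not> ?thesis"
    then have "c*x \<le> 4" by simp
    then have "c*x*y \<le> 4*y" using y1 by (simp add: mult_right_mono)
    then show False using Dpos x1 by linarith
  qed
  have cy17: "c*y \<ge> 17"
  proof (rule ccontr)
    assume "\<not> ?thesis"
    then have "c*y \<le> 16" by simp
    then have "c*y*x \<le> 16*x" using x1 by (simp add: mult_right_mono)
    then show False using Dpos y1 by (simp add: algebra_simps)
  qed
  have fac: "(c*x - 4)*(c*y - 16) = a^3 + 64"
  proof -
    have "(c*x - 4)*(c*y - 16) = c*(c*x*y - 16*x - 4*y) + 64" by (simp add: algebra_simps)
    also have "c*(c*x*y - 16*x - 4*y) = a * (k * (c*x*y - 16*x - 4*y))" unfolding c_def by simp
    also have "\<dots> = a^3" using E by (simp add: power2_eq_square power3_eq_cube)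
    finally show ?thesis .
  qed
  have cxb: "c*x \<le> a^3 + 68"
  proof -
    have "(c*x - 4) * 1 \<le> (c*x - 4)*(c*y - 16)" using cx5 cy17 by (intro mult_left_mono) auto
    then show ?thesis using fac by simp
  qed
  have mu40: "\<mu> \<le> 40"
  proof (rule ccontr)
    assume "\<not> ?thesis"
    then have "\<mu> \<ge> 41" by simp
    then have "x \<ge> 1681" unfolding x_def using power_mono[of 41 \<mu> 2] by simp
    then have "a * x \<ge> a * 1681" using a1 by simp
    moreover have "a * x \<le> c * x" using c_a x1 by (simp add: mult_right_mono)
    moreover have "a^2 \<le> 1600" using c_a c40 a1 power_mono[of a 40 2] by simp
    then have "a^3 \<le> 1600 * a" using a1 by (simp add: power3_eq_cube power2_eq_square mult_right_mono)
    ultimately show False using cxb a1 by linarith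
  qed
  define K where "K = k*(a*k*\<mu>*\<mu>-4)"
  define M where "M = a*a+16*k*\<mu>*\<mu>"
  have xmu: "x = \<mu>*\<mu>" unfolding x_def by (simp add: power2_eq_square)
  have Kpos: "0 < K" unfolding K_def using cx5 k1 unfolding c_def xmu by (simp add: mult.assoc)
  have yK: "y * K = M"
    using E unfolding K_def M_def c_def xmu by (simp add: algebra_simps power2_eq_square)
  have Mmod: "M mod K = 0" using yK by (metis mod_mult_self2_is_0)
  have Mdiv: "M div K = y" using yK Kpos by (metis nonzero_mult_div_cancel_right less_irrefl)
  have kodd: "k mod 2 = 1" using assms(2) by presburger
  have kdvd: "(a*a) mod k = 0" using E by (metis dvd_imp_mod_0 dvd_triv_left power2_eq_square)
  have "let y' = M div K in y' mod 3 = 2 \<or> (\<mu> mod 3 = 0 \<and> y' mod 3 = 0) \<or> (k = 5 \<and> \<mu> = 1 \<and> y' = 1)"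
    unfolding M_def K_def
  proof (rule chk_inst)
    show "1 \<le> a" "a \<le> 40" using a1 c_a c40 by auto
    show "1 \<le> k" "k \<le> 40" using k1 c_k c40 by auto
    show "1 \<le> \<mu>" "\<mu> \<le> 40" using assms(3) mu40 by auto
    show "a*k \<le> 40" using c40 c_def by simp
    show "k mod 2 = 1" by (fact kodd)
    show "(a*a) mod k = 0" by (fact kdvd)
    show "a*k*\<mu>*\<mu> \<le> a^3+68" using cxb unfolding c_def xmu by (simp add: mult.assoc)
    show "0 < k*(a*k*\<mu>*\<mu>-4)" using Kpos K_def by simp
    show "(a*a+16*k*\<mu>*\<mu>) mod (k*(a*k*\<mu>*\<mu>-4)) = 0" using Mmod M_def K_def by simp
  qed
  then have R: "y mod 3 = 2 \<or> (\<mu> mod 3 = 0 \<and> y mod 3 = 0) \<or> (k = 5 \<and> \<mu> = 1 \<and> y = 1)"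
    using Mdiv by simp
  have "y mod 3 \<noteq> 2" unfolding y_def by (rule sq_mod3)
  moreover have "\<not> (\<mu> mod 3 = 0 \<and> y mod 3 = 0)"
  proof
    assume h: "\<mu> mod 3 = 0 \<and> y mod 3 = 0"
    then have "(3::int) dvd n^2" unfolding y_def by auto
    then have "(3::int) dvd n" by (rule sq3_dvd)
    moreover have "(3::int) dvd 2*\<mu>" using h by auto
    ultimately have "(3::int) dvd 1" using assms(5) by (meson coprime_common_divisor)
    then show False by simp
  qed
  ultimately have "k = 5 \<and> \<mu> = 1 \<and> y = 1" using R by blast
  moreover have "n = 1" if "y = 1"
  proof -
    have "n^2 = 1^2" using that y_def by simp
    then have "n = 1 \<or> n = -1" using power2_eq_iff by blast
    then show ?thesis using assms(4) by auto
  qed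
  ultimately show ?thesis by blast
qed

end
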